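(* Assume (A1)–(A3) below. For any $\mathcal M\subset[n]$, \[ \hat{\boldsymbol\beta}_{\setminus\mathcal M}-\hat{\boldsymbol\beta}=\bar{\mathbf G}^{-1}\Big(\sum_{i\in\mathcal M}\dot\ell_i(\hat{\boldsymbol\beta}_{\setminus\mathcal M})\mathbf x_i\Big)=\bar{\mathbf G}_{\setminus\mathcal M}^{-1}\Big(\sum_{i\in\mathcal M}\dot\ell_i(\hat{\boldsymbol\beta})\mathbf x_i\Big), \] where $\bar{\mathbf G}=\int_0^1\mathbf G(t\hat{\boldsymbol\beta}+(1-t)\hat{\boldsymbol\beta}_{\setminus\mathcal M})\,dt$ and $\bar{\mathbf G}_{\setminus\mathcal M}=\int_0^1\mathbf G_{\setminus\mathcal M}(t\hat{\boldsymbol\beta}+(1-t)\hat{\boldsymbol\beta}_{\setminus\mathcal M})\,dt$, with $\mathbf G(\boldsymbol\beta)=\mathbf X^\top\mathrm{diag}[\ddot\ell_i(\boldsymbol\beta)]_{i\in[n]}\mathbf X+\lambda\,\mathrm{diag}[\ddot r_k(\beta_k)]_{k\in[p]}$ and $\mathbf G_{\setminus\mathcal M}(\boldsymbol\beta)=\mathbf X_{\setminus\mathcal M}^\top\mathrm{diag}[\ddot\ell_i(\boldsymbol\beta)]_{i\notin\mathcal M}\mathbf X_{\setminus\mathcal M}+\lambda\,\mathrm{diag}[\ddot r_k(\beta_k)]_{k\in[p]}$.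
   Context: Data $\{(y_i,\mathbf x_i)\}_{i=1}^n$, $\mathbf x_i\in\mathbb R^p$; $\mathbf X\in\mathbb R^{n\times p}$ has rows $\mathbf x_i^\top$ and $\mathbf X_{\setminus\mathcal M}$ consists of the rows with $i\notin\mathcal M$. Loss $\ell(y|z)\ge0$ with derivatives $\dot\ell,\ddot\ell$ in $z$; $\ell_i(\boldsymbol\beta)=\ell(y_i|\mathbf x_i^\top\boldsymbol\beta)$, $\dot\ell_i(\boldsymbol\beta)=\dot\ell(y_i|\mathbf x_i^\top\boldsymbol\beta)$, $\ddot\ell_i$ similarly. $\lambda>0$. $\hat{\boldsymbol\beta}=\arg\min_{\boldsymbol\beta}\sum_{i=1}^n\ell_i(\boldsymbol\beta)+\lambda r(\boldsymbol\beta)$ and $\hat{\boldsymbol\beta}_{\setminus\mathcal M}=\arg\min_{\boldsymbol\beta}\sum_{i\notin\mathcal M}\ell_i(\boldsymbol\beta)+\lambda r(\boldsymbol\beta)$. Assumptions: (A1) $r(\boldsymbol\beta)=\sum_{k=1}^pr_k(\beta_k)$, $r\ge0$; (A2) $\ell$ (in $z$) and $r$ are twice differentiable; (A3) $\ell$ and $r$ are proper convex and $r$ is $\nu$-strongly convex for a constant $\nu>0$. *)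

theory Defs
  imports "HOL-Analysis.Analysis"
begin

definition diag_mat :: "real^'k \<Rightarrow> real^'k^'k" where
  "diag_mat d = (\<chi> j k. if j = k then d $ j else 0)"

definition outer :: "real^'k \<Rightarrow> real^'k^'k" where
  "outer x = (\<chi> j k. x $ j * x $ k)"

definition sep_pen :: "('p::finite \<Rightarrow> real \<Rightarrow> real) \<Rightarrow> real^'p \<Rightarrow> real" where
  "sep_pen rk \<beta> = (\<Sum>k\<in>UNIV. rk k (\<beta> $ k))"

definition objective ::
  "('y \<Rightarrow> real \<Rightarrow> real) \<Rightarrow> ('p::finite \<Rightarrow> real \<Rightarrow> real) \<Rightarrow> real \<Rightarrow>
   ('n::finite \<Rightarrow> 'y) \<Rightarrow> real^'p^'n \<Rightarrow> 'n set \<Rightarrow> real^'p \<Rightarrow> real" where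
  "objective l rk lam y X S \<beta> =
     (\<Sum>i\<in>S. l (y i) (X $ i \<bullet> \<beta>)) + lam * sep_pen rk \<beta>"

text \<open>Hessian-type matrix using rows in S:
  X_S^T diag[l''_i(beta)]_{i in S} X_S + lambda diag[r_k''(beta_k)]
  = sum_{i in S} l''_i(beta) x_i x_i^T + lambda diag[r_k''(beta_k)].\<close>
definition Gmat ::
  "('y \<Rightarrow> real \<Rightarrow> real) \<Rightarrow> ('p::finite \<Rightarrow> real \<Rightarrow> real) \<Rightarrow> real \<Rightarrow>
   ('n::finite \<Rightarrow> 'y) \<Rightarrow> real^'p^'n \<Rightarrow> 'n set \<Rightarrow> real^'p \<Rightarrow> real^'p^'p" where
  "Gmat l2 r2 lam y X S \<beta> =
     (\<Sum>i\<in>S. l2 (y i) (X $ i \<bullet> \<beta>) *\<^sub>R outer (X $ i))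
     + lam *\<^sub>R diag_mat (\<chi> k. r2 k (\<beta> $ k))"

definition strongly_convex :: "real \<Rightarrow> ('a::real_normed_vector \<Rightarrow> real) \<Rightarrow> bool" where
  "strongly_convex \<nu> f \<longleftrightarrow>
     (\<forall>a b. \<forall>t\<in>{0..1}. f (t *\<^sub>R a + (1 - t) *\<^sub>R b)
        \<le> t * f a + (1 - t) * f b - \<nu> / 2 * t * (1 - t) * (norm (a - b))\<^sup>2)"

end

theory Submission
  imports Defs
begin

lemma d2_nonneg:
  fixes g g1 g2 :: "real \<Rightarrow> real"
  assumes cv: "convex_on UNIV g"
    and d1: "\<And>z. (g has_real_derivative g1 z) (at z)"
    and d2: "\<And>z. (g1 has_real_derivative g2 z) (at z)"
  shows "g2 z \<ge> 0"
proof -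
  have mono: "g1 x \<le> g1 w" if "x < w" for x w
  proof -
    have "g w - g x \<ge> g1 x * (w - x)"
      by (rule convex_on_imp_above_tangent[OF cv]) (auto simp: d1)
    moreover have "g x - g w \<ge> g1 w * (x - w)"
      by (rule convex_on_imp_above_tangent[OF cv]) (auto simp: d1)
    ultimately have "(g1 w - g1 x) * (w - x) \<ge> 0" by (simp add: algebra_simps)
    with that show ?thesis by (simp add: zero_le_mult_iff)
  qed
  show ?thesis
  proof (rule ccontr)
    assume "\<not> 0 \<le> g2 z"
    then have "g2 z < 0" by simp
    from DERIV_neg_dec_right[OF d2 this] obtain d where "d > 0" "\<forall>h>0. h < d \<longrightarrow> g1 z > g1 (z + h)" by auto
    then have "g1 z > g1 (z + d/2)" by auto
    moreover have "g1 z \<le> g1 (z + d/2)" using mono \<open>d > 0\<close> by auto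
    ultimately show False by simp
  qed
qed

lemma scal_int:
  fixes g g2 :: "real \<Rightarrow> real"
  assumes d: "\<And>z. (g has_real_derivative g2 z) (at z)"
  shows "(\<lambda>t. g2 (a + t * c)) integrable_on {0..1}"
proof (cases "c = 0")
  case True then show ?thesis by (simp add: integrable_const_ivl)
next
  case False
  have "((\<lambda>t. g (a + t * c)) has_vector_derivative (g2 (a + t * c) * c)) (at t within {0..1})" for t
    unfolding has_real_derivative_iff_has_vector_derivative[symmetric]
    by (rule DERIV_chain2[OF d]) (auto intro!: derivative_eq_intros)
  then have "(\<lambda>t. g2 (a + t * c) * c) integrable_on {0..1}"
    using fundamental_theorem_of_calculus[of 0 1 "\<lambda>t. g (a + t * c)" "\<lambda>t. g2 (a + t * c) * c"]
    by (auto simp: integrable_on_def)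
  then show ?thesis using False by simp
qed

lemma vec_deriv_sc:
  fixes g g2 :: "real \<Rightarrow> real" and v :: "'a::real_normed_vector"
  assumes d: "\<And>z. (g has_real_derivative g2 z) (at z)"
  shows "((\<lambda>t. g (a + t * c) *\<^sub>R v) has_vector_derivative ((g2 (a + t * c) * c) *\<^sub>R v)) (at t within S)"
proof -
  have "((\<lambda>t. g (a + t * c)) has_real_derivative (g2 (a + t * c) * c)) (at t within S)"
    by (rule DERIV_chain2[OF d]) (auto intro!: derivative_eq_intros)
  from has_vector_derivative_scaleR[OF this has_vector_derivative_const[of v]] show ?thesis by simp
qed

lemma grad_zero:
  fixes l l1 :: "'y \<Rightarrow> real \<Rightarrow> real"
    and rk r1 :: "'p::finite \<Rightarrow> real \<Rightarrow> real"
    and y :: "'n::finite \<Rightarrow> 'y" and X :: "real^'p^'n" and \<beta> :: "real^'p"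
  assumes l_d1: "\<And>u z. (l u has_real_derivative l1 u z) (at z)"
    and r_d1: "\<And>k s. (rk k has_real_derivative r1 k s) (at s)"
    and mn: "\<And>b. objective l rk lam y X S \<beta> \<le> objective l rk lam y X S b"
  shows "(\<Sum>i\<in>S. l1 (y i) (X $ i \<bullet> \<beta>) *\<^sub>R X $ i) + lam *\<^sub>R (\<chi> k. r1 k (\<beta> $ k)) = 0"
proof (rule vec_eq_iff[THEN iffD2], rule allI)
  fix k
  define f where "f s = objective l rk lam y X S (\<beta> + s *\<^sub>R axis k 1)" for s
  have f_eq: "f s = (\<Sum>i\<in>S. l (y i) (X $ i \<bullet> \<beta> + s * X $ i $ k))
       + lam * (\<Sum>j\<in>UNIV. rk j (\<beta> $ j + s * (if j = k then 1 else 0)))" for s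
    unfolding f_def objective_def sep_pen_def
    by (simp add: inner_add_right inner_axis) (simp add: axis_def)
  have "(f has_real_derivative (\<Sum>i\<in>S. l1 (y i) (X $ i \<bullet> \<beta> + 0 * X $ i $ k) * X $ i $ k)
       + lam * (\<Sum>j\<in>UNIV. r1 j (\<beta> $ j + 0 * (if j = k then 1 else 0)) * (if j = k then 1 else 0))) (at 0)"
    unfolding f_eq[abs_def]
  proof (intro DERIV_add DERIV_cmult DERIV_sum)
    show "((\<lambda>s. l (y i) (X $ i \<bullet> \<beta> + s * X $ i $ k)) has_real_derivative
         l1 (y i) (X $ i \<bullet> \<beta> + 0 * X $ i $ k) * X $ i $ k) (at 0)" for i
      by (rule DERIV_chain2[OF l_d1]) (auto intro!: derivative_eq_intros)
    show "((\<lambda>s. rk j (\<beta> $ j + s * (if j = k then 1 else 0))) has_real_derivative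
         r1 j (\<beta> $ j + 0 * (if j = k then 1 else 0)) * (if j = k then 1 else 0)) (at 0)" for j
      by (rule DERIV_chain2[OF r_d1]) (auto intro!: derivative_eq_intros)
  qed
  then have d: "(f has_real_derivative (\<Sum>i\<in>S. l1 (y i) (X $ i \<bullet> \<beta>) * X $ i $ k)
       + lam * r1 k (\<beta> $ k)) (at 0)"
    by (simp add: if_distrib cong: if_cong)
  have "(\<Sum>i\<in>S. l1 (y i) (X $ i \<bullet> \<beta>) * X $ i $ k) + lam * r1 k (\<beta> $ k) = 0"
    by (rule DERIV_local_min[OF d, of 1]) (auto simp: f_def mn)
  then show "((\<Sum>i\<in>S. l1 (y i) (X $ i \<bullet> \<beta>) *\<^sub>R X $ i) + lam *\<^sub>R (\<chi> k. r1 k (\<beta> $ k))) $ k = 0 $ k"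
    by simp
qed

lemma sep_pen_axis:
  fixes rk :: "'p::finite \<Rightarrow> real \<Rightarrow> real"
  shows "sep_pen rk (axis k u) = rk k u + (\<Sum>j\<in>UNIV - {k}. rk j 0)"
proof -
  have "sep_pen rk (axis k u) = rk k (axis k u $ k) + (\<Sum>j\<in>UNIV - {k}. rk j (axis k u $ j))"
    unfolding sep_pen_def by (simp add: sum.remove[of UNIV k])
  also have "(\<Sum>j\<in>UNIV - {k}. rk j (axis k u $ j)) = (\<Sum>j\<in>UNIV - {k}. rk j 0)"
    by (rule sum.cong) (auto simp: axis_def)
  finally show ?thesis by (simp add: axis_def)
qed

lemma r2_ge:
  fixes rk r1 r2 :: "'p::finite \<Rightarrow> real \<Rightarrow> real"
  assumes r_d1: "\<And>k s. (rk k has_real_derivative r1 k s) (at s)"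
    and r_d2: "\<And>k s. (r1 k has_real_derivative r2 k s) (at s)"
    and sc: "strongly_convex \<nu> (sep_pen rk)"
  shows "r2 k s \<ge> \<nu>"
proof -
  define C where "C = (\<Sum>j\<in>UNIV - {k}. rk j 0)"
  define g where "g s = rk k s - \<nu> / 2 * s\<^sup>2" for s
  have "convex_on UNIV g"
  proof (rule convex_onI)
    fix t x w :: real assume t: "0 < t" "t < 1"
    have "sep_pen rk ((1 - t) *\<^sub>R axis k x + (1 - (1 - t)) *\<^sub>R axis k w)
        \<le> (1 - t) * sep_pen rk (axis k x) + (1 - (1 - t)) * sep_pen rk (axis k w)
           - \<nu> / 2 * (1 - t) * (1 - (1 - t)) * (norm (axis k x - axis k w))\<^sup>2"
    proof -
      have "1 - t \<in> {0..1}" using t by auto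
      then show ?thesis using sc unfolding strongly_convex_def by blast
    qed
    moreover have "(1 - t) *\<^sub>R axis k x + (1 - (1 - t)) *\<^sub>R axis k w = axis k ((1 - t) * x + t * w)"
      by (simp add: vec_eq_iff axis_def)
    moreover have "axis k x - axis k w = axis k (x - w)"
      by (simp add: vec_eq_iff axis_def)
    moreover have "(norm (axis k (x - w)))\<^sup>2 = (x - w)\<^sup>2"
      by (simp only: power2_norm_eq_inner inner_axis_axis) (simp add: power2_eq_square)
    ultimately have "rk k ((1 - t) * x + t * w) \<le> (1 - t) * rk k x + t * rk k w
           - \<nu> / 2 * (1 - t) * t * (x - w)\<^sup>2"
      by (simp add: sep_pen_axis algebra_simps)
    moreover have "\<nu> / 2 * ((1 - t) * x\<^sup>2 + t * w\<^sup>2) - \<nu> / 2 * ((1 - t) * x + t * w)\<^sup>2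
        = \<nu> / 2 * (1 - t) * t * (x - w)\<^sup>2"
      by (simp add: power2_eq_square field_simps)
    moreover have "(1 - t) * (rk k x - \<nu> / 2 * x\<^sup>2) + t * (rk k w - \<nu> / 2 * w\<^sup>2)
        = (1 - t) * rk k x + t * rk k w - \<nu> / 2 * ((1 - t) * x\<^sup>2 + t * w\<^sup>2)"
      by (simp add: field_simps)
    ultimately show "g ((1 - t) *\<^sub>R x + t *\<^sub>R w) \<le> (1 - t) * g x + t * g w"
      unfolding g_def real_scaleR_def by linarith
  qed simp
  moreover have "(g has_real_derivative (r1 k z - \<nu> * z)) (at z)" for z
    unfolding g_def by (auto intro!: derivative_eq_intros r_d1)
  moreover have "((\<lambda>z. r1 k z - \<nu> * z) has_real_derivative (r2 k z - \<nu>)) (at z)" for z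
    by (auto intro!: derivative_eq_intros r_d2)
  ultimately have "r2 k s - \<nu> \<ge> 0" by (rule d2_nonneg)
  then show ?thesis by simp
qed

lemma mv_bl: "bounded_linear (\<lambda>A::real^'a^'b. A *v e)"
proof -
  have "linear (\<lambda>A::real^'a^'b. A *v e)"
    by (rule linearI) (simp_all add: matrix_vector_mult_add_rdistrib scaleR_matrix_vector_assoc)
  then show ?thesis by (simp add: linear_conv_bounded_linear)
qed

lemma outer_mv: "outer x *v e = (x \<bullet> e) *\<^sub>R x"
  by (simp add: vec_eq_iff outer_def matrix_vector_mult_def inner_vec_def sum_distrib_left algebra_simps)

lemma diag_mv: "diag_mat d *v e = (\<chi> k. d $ k * e $ k)"
  by (simp add: vec_eq_iff diag_mat_def matrix_vector_mult_def if_distrib[where f="\<lambda>a. a * _"] cong: if_cong)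

lemma G_mv:
  "Gmat l2 r2 lam y X S \<beta> *v e =
     (\<Sum>i\<in>S. (l2 (y i) (X $ i \<bullet> \<beta>) * (X $ i \<bullet> e)) *\<^sub>R X $ i)
     + lam *\<^sub>R (\<chi> k. r2 k (\<beta> $ k) * e $ k)"
proof -
  interpret bl: bounded_linear "\<lambda>A::real^'a^'a. A *v e" by (rule mv_bl)
  show ?thesis
    unfolding Gmat_def bl.add bl.sum bl.scaleR by (simp add: outer_mv diag_mv)
qed

lemma G_quad:
  "v \<bullet> (Gmat l2 r2 lam y X S \<beta> *v v) =
     (\<Sum>i\<in>S. l2 (y i) (X $ i \<bullet> \<beta>) * (X $ i \<bullet> v)\<^sup>2)
     + lam * (\<Sum>k\<in>UNIV. r2 k (\<beta> $ k) * (v $ k)\<^sup>2)"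
proof -
  have a: "v \<bullet> (\<Sum>i\<in>S. (l2 (y i) (X $ i \<bullet> \<beta>) * (X $ i \<bullet> v)) *\<^sub>R X $ i)
      = (\<Sum>i\<in>S. l2 (y i) (X $ i \<bullet> \<beta>) * (X $ i \<bullet> v)\<^sup>2)"
    by (simp add: inner_sum_right inner_commute[of v] power2_eq_square mult.assoc)
  have b: "v \<bullet> (\<chi> k. r2 k (\<beta> $ k) * v $ k) = (\<Sum>k\<in>UNIV. r2 k (\<beta> $ k) * (v $ k)\<^sup>2)"
    by (simp add: inner_vec_def power2_eq_square algebra_simps)
  show ?thesis unfolding G_mv inner_add_right inner_scaleR_right a b ..
qed

lemma inv_solve:
  fixes A :: "real^'n^'n"
  assumes ker: "\<forall>v. A *v v = 0 \<longrightarrow> v = 0" and eq: "A *v x = b"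
  shows "x = matrix_inv A *v b"
proof -
  obtain B :: "real^'n^'n" where B: "B ** A = mat 1"
    using ker matrix_left_invertible_ker[of A] by blast
  then have "A ** B = mat 1" by (simp add: matrix_left_right_inverse)
  with B have ex: "\<exists>A'. A ** A' = mat 1 \<and> A' ** A = mat 1" by blast
  have "matrix_inv A ** A = mat 1"
    using someI_ex[OF ex] unfolding matrix_inv_def by blast
  then show ?thesis
    using eq by (metis matrix_vector_mul_assoc matrix_vector_mul_lid)
qed

lemma posdef_ker:
  fixes f :: "real \<Rightarrow> real^'n^'n"
  assumes int: "f integrable_on {0..1}" and c: "c > 0"
    and pd: "\<And>t v. t \<in> {0..1} \<Longrightarrow> v \<bullet> (f t *v v) \<ge> c * (norm v)\<^sup>2"
  shows "\<forall>v. integral {0..1} f *v v = 0 \<longrightarrow> v = 0"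
proof (intro allI impI)
  fix v assume z: "integral {0..1} f *v v = 0"
  have bl: "bounded_linear (\<lambda>A::real^'n^'n. v \<bullet> (A *v v))"
    using bounded_linear_compose[OF bounded_linear_inner_right[of v] mv_bl[of v]] by simp
  have "((\<lambda>t. v \<bullet> (f t *v v)) has_integral (v \<bullet> (integral {0..1} f *v v))) {0..1}"
    using has_integral_linear[OF integrable_integral[OF int] bl] by (simp add: o_def)
  then have h: "((\<lambda>t. v \<bullet> (f t *v v)) has_integral 0) {0..1}" using z by simp
  have "c * (norm v)\<^sup>2 \<le> 0"
    using has_integral_le[OF has_integral_const_real[of "c * (norm v)\<^sup>2" 0 1] h] pd by simp
  then show "v = 0" using c by (simp add: mult_le_0_iff)
qed

lemma diag_sum: "diag_mat (\<chi> k. f k) = (\<Sum>k\<in>UNIV. f k *\<^sub>R diag_mat (axis k (1::real)))"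
  by (simp add: vec_eq_iff diag_mat_def axis_def if_distrib[where f="\<lambda>a. _ * a"] cong: if_cong)

lemma vec_sum: "(\<chi> k. f k) = (\<Sum>k\<in>UNIV. f k *\<^sub>R axis k (1::real))"
  by (simp add: vec_eq_iff axis_def if_distrib[where f="\<lambda>a. _ * a"] cong: if_cong)

lemma G_path:
  fixes l1 l2 :: "'y \<Rightarrow> real \<Rightarrow> real"
    and r1 r2 :: "'p::finite \<Rightarrow> real \<Rightarrow> real"
    and y :: "'n::finite \<Rightarrow> 'y" and X :: "real^'p^'n" and bh bM :: "real^'p"
  assumes l_d2: "\<And>u z. (l1 u has_real_derivative l2 u z) (at z)"
    and r_d2: "\<And>k s. (r1 k has_real_derivative r2 k s) (at s)"
  shows "(\<lambda>t. Gmat l2 r2 lam y X S (t *\<^sub>R bh + (1 - t) *\<^sub>R bM)) integrable_on {0..1}"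
    and "integral {0..1} (\<lambda>t. Gmat l2 r2 lam y X S (t *\<^sub>R bh + (1 - t) *\<^sub>R bM)) *v (bh - bM)
       = ((\<Sum>i\<in>S. l1 (y i) (X $ i \<bullet> bh) *\<^sub>R X $ i) + lam *\<^sub>R (\<chi> k. r1 k (bh $ k)))
       - ((\<Sum>i\<in>S. l1 (y i) (X $ i \<bullet> bM) *\<^sub>R X $ i) + lam *\<^sub>R (\<chi> k. r1 k (bM $ k)))"
proof -
  define e where "e = bh - bM"
  have gam: "t *\<^sub>R bh + (1 - t) *\<^sub>R bM = bM + t *\<^sub>R e" for t
    by (simp add: e_def algebra_simps)
  have Geq: "Gmat l2 r2 lam y X S (t *\<^sub>R bh + (1 - t) *\<^sub>R bM)
     = (\<Sum>i\<in>S. l2 (y i) (X $ i \<bullet> bM + t * (X $ i \<bullet> e)) *\<^sub>R outer (X $ i))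
       + lam *\<^sub>R (\<Sum>k\<in>UNIV. r2 k (bM $ k + t * e $ k) *\<^sub>R diag_mat (axis k 1))" for t
    unfolding Gmat_def gam diag_sum by (simp add: inner_add_right)
  show int: "(\<lambda>t. Gmat l2 r2 lam y X S (t *\<^sub>R bh + (1 - t) *\<^sub>R bM)) integrable_on {0..1}"
    unfolding Geq
    by (intro integrable_add integrable_sum integrable_cmul integrable_on_scaleR_left
        scal_int[OF l_d2] scal_int[OF r_d2] finite)
  define F where "F b = (\<Sum>i\<in>S. l1 (y i) (X $ i \<bullet> b) *\<^sub>R X $ i) + lam *\<^sub>R (\<chi> k. r1 k (b $ k))" for b
  have Feq: "F (bM + t *\<^sub>R e) = (\<Sum>i\<in>S. l1 (y i) (X $ i \<bullet> bM + t * (X $ i \<bullet> e)) *\<^sub>R X $ i)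
       + lam *\<^sub>R (\<Sum>k\<in>UNIV. r1 k (bM $ k + t * e $ k) *\<^sub>R axis k 1)" for t
    unfolding F_def vec_sum[of "\<lambda>k. r1 k ((bM + t *\<^sub>R e) $ k)"] by (simp add: inner_add_right)
  have "((\<lambda>t. F (bM + t *\<^sub>R e)) has_vector_derivative
      ((\<Sum>i\<in>S. (l2 (y i) (X $ i \<bullet> bM + t * (X $ i \<bullet> e)) * (X $ i \<bullet> e)) *\<^sub>R X $ i)
       + lam *\<^sub>R (\<Sum>k\<in>UNIV. (r2 k (bM $ k + t * e $ k) * e $ k) *\<^sub>R axis k 1))) (at t within {0..1})" for t
    unfolding Feq
    by (intro has_vector_derivative_add has_vector_derivative_sum vec_deriv_sc[OF l_d2] vec_deriv_sc[OF r_d2]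
        bounded_linear.has_vector_derivative[OF bounded_linear_scaleR_right])
  moreover have "(\<Sum>i\<in>S. (l2 (y i) (X $ i \<bullet> bM + t * (X $ i \<bullet> e)) * (X $ i \<bullet> e)) *\<^sub>R X $ i)
       + lam *\<^sub>R (\<Sum>k\<in>UNIV. (r2 k (bM $ k + t * e $ k) * e $ k) *\<^sub>R axis k 1)
     = Gmat l2 r2 lam y X S (t *\<^sub>R bh + (1 - t) *\<^sub>R bM) *v e" for t
    unfolding G_mv gam vec_sum[of "\<lambda>k. r2 k ((bM + t *\<^sub>R e) $ k) * e $ k"] by (simp add: inner_add_right)
  ultimately have "((\<lambda>t. F (bM + t *\<^sub>R e)) has_vector_derivative
      (Gmat l2 r2 lam y X S (t *\<^sub>R bh + (1 - t) *\<^sub>R bM) *v e)) (at t within {0..1})" for t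
    by metis
  then have h1: "((\<lambda>t. Gmat l2 r2 lam y X S (t *\<^sub>R bh + (1 - t) *\<^sub>R bM) *v e) has_integral
      (F (bM + 1 *\<^sub>R e) - F (bM + 0 *\<^sub>R e))) {0..1}"
    by (intro fundamental_theorem_of_calculus) auto
  have h2: "((\<lambda>t. Gmat l2 r2 lam y X S (t *\<^sub>R bh + (1 - t) *\<^sub>R bM) *v e) has_integral
      (integral {0..1} (\<lambda>t. Gmat l2 r2 lam y X S (t *\<^sub>R bh + (1 - t) *\<^sub>R bM)) *v e)) {0..1}"
    using has_integral_linear[OF integrable_integral[OF int] mv_bl[of e]] by (simp add: o_def)
  from has_integral_unique[OF h2 h1] show "integral {0..1} (\<lambda>t. Gmat l2 r2 lam y X S (t *\<^sub>R bh + (1 - t) *\<^sub>R bM)) *v (bh - bM)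
       = ((\<Sum>i\<in>S. l1 (y i) (X $ i \<bullet> bh) *\<^sub>R X $ i) + lam *\<^sub>R (\<chi> k. r1 k (bh $ k)))
       - ((\<Sum>i\<in>S. l1 (y i) (X $ i \<bullet> bM) *\<^sub>R X $ i) + lam *\<^sub>R (\<chi> k. r1 k (bM $ k)))"
    by (simp add: F_def e_def)
qed

lemma pd_G:
  fixes l l1 l2 :: "'y \<Rightarrow> real \<Rightarrow> real"
    and rk r1 r2 :: "'p::finite \<Rightarrow> real \<Rightarrow> real"
    and y :: "'n::finite \<Rightarrow> 'y" and X :: "real^'p^'n"
  assumes lam: "lam > 0"
    and l_d1: "\<And>u z. (l u has_real_derivative l1 u z) (at z)"
    and l_d2: "\<And>u z. (l1 u has_real_derivative l2 u z) (at z)"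
    and r_d1: "\<And>k s. (rk k has_real_derivative r1 k s) (at s)"
    and r_d2: "\<And>k s. (r1 k has_real_derivative r2 k s) (at s)"
    and l_convex: "\<And>u. convex_on UNIV (l u)"
    and sc: "strongly_convex \<nu> (sep_pen rk)"
  shows "v \<bullet> (Gmat l2 r2 lam y X S \<beta> *v v) \<ge> (lam * \<nu>) * (norm v)\<^sup>2"
proof -
  have "(\<Sum>i\<in>S. l2 (y i) (X $ i \<bullet> \<beta>) * (X $ i \<bullet> v)\<^sup>2) \<ge> 0"
    by (intro sum_nonneg mult_nonneg_nonneg d2_nonneg[OF l_convex l_d1 l_d2]) simp
  moreover have "(\<Sum>k\<in>UNIV. r2 k (\<beta> $ k) * (v $ k)\<^sup>2) \<ge> (\<Sum>k\<in>UNIV. \<nu> * (v $ k)\<^sup>2)"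
    by (intro sum_mono mult_right_mono r2_ge[OF r_d1 r_d2 sc]) simp
  moreover have "(\<Sum>k\<in>UNIV. \<nu> * (v $ k)\<^sup>2) = \<nu> * (norm v)\<^sup>2"
    unfolding power2_norm_eq_inner by (simp add: inner_vec_def sum_distrib_left power2_eq_square)
  ultimately have "v \<bullet> (Gmat l2 r2 lam y X S \<beta> *v v) \<ge> lam * (\<nu> * (norm v)\<^sup>2)"
    unfolding G_quad using lam by (smt (verit) mult_left_mono)
  then show ?thesis by (simp add: mult.assoc)
qed

theorem lemma10:
  fixes l l1 l2 :: "'y \<Rightarrow> real \<Rightarrow> real"
    and rk r1 r2 :: "'p::finite \<Rightarrow> real \<Rightarrow> real"
    and y :: "'n::finite \<Rightarrow> 'y"
    and X :: "real^'p^'n"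
    and lam \<nu> :: real
    and M :: "'n set"
    and bh bM :: "real^'p"
  assumes lam_pos: "lam > 0"
    and l_nonneg: "\<And>u z. l u z \<ge> 0"
    and r_nonneg: "\<And>\<beta>. sep_pen rk \<beta> \<ge> 0"
    and l_d1: "\<And>u z. (l u has_real_derivative l1 u z) (at z)"
    and l_d2: "\<And>u z. (l1 u has_real_derivative l2 u z) (at z)"
    and r_d1: "\<And>k s. (rk k has_real_derivative r1 k s) (at s)"
    and r_d2: "\<And>k s. (r1 k has_real_derivative r2 k s) (at s)"
    and l_convex: "\<And>u. convex_on UNIV (l u)"
    and nu_pos: "\<nu> > 0"
    and r_strong: "strongly_convex \<nu> (sep_pen rk)"
    and bh_min: "\<And>\<beta>. objective l rk lam y X UNIV bh \<le> objective l rk lam y X UNIV \<beta>"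
    and bM_min: "\<And>\<beta>. objective l rk lam y X (- M) bM \<le> objective l rk lam y X (- M) \<beta>"
  shows "bM - bh
           = matrix_inv (integral {0..1}
               (\<lambda>t. Gmat l2 r2 lam y X UNIV (t *\<^sub>R bh + (1 - t) *\<^sub>R bM)))
             *v (\<Sum>i\<in>M. l1 (y i) (X $ i \<bullet> bM) *\<^sub>R X $ i)
       \<and> bM - bh
           = matrix_inv (integral {0..1}
               (\<lambda>t. Gmat l2 r2 lam y X (- M) (t *\<^sub>R bh + (1 - t) *\<^sub>R bM)))
             *v (\<Sum>i\<in>M. l1 (y i) (X $ i \<bullet> bh) *\<^sub>R X $ i)"
proof -
  let ?F = "\<lambda>S b. (\<Sum>i\<in>S. l1 (y i) (X $ i \<bullet> b) *\<^sub>R X $ i) + lam *\<^sub>R (\<chi> k. r1 k (b $ k))"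
  have gh: "?F UNIV bh = 0" by (rule grad_zero[OF l_d1 r_d1 bh_min])
  have gM: "?F (- M) bM = 0" by (rule grad_zero[OF l_d1 r_d1 bM_min])
  have split: "(\<Sum>i\<in>UNIV. f i) = (\<Sum>i\<in>M. f i) + (\<Sum>i\<in>- M. f i)" for f :: "'n \<Rightarrow> real^'p"
  proof -
    have "(\<Sum>i\<in>M \<union> - M. f i) = (\<Sum>i\<in>M. f i) + (\<Sum>i\<in>- M. f i)"
      by (rule sum.union_disjoint) auto
    then show ?thesis by simp
  qed
  have pd: "\<And>S t v. v \<bullet> (Gmat l2 r2 lam y X S (t *\<^sub>R bh + (1 - t) *\<^sub>R bM) *v v) \<ge> (lam * \<nu>) * (norm v)\<^sup>2"
    by (rule pd_G[OF lam_pos l_d1 l_d2 r_d1 r_d2 l_convex r_strong])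
  have c: "lam * \<nu> > 0" using lam_pos nu_pos by simp
  have ker: "\<And>S. \<forall>v. integral {0..1} (\<lambda>t. Gmat l2 r2 lam y X S (t *\<^sub>R bh + (1 - t) *\<^sub>R bM)) *v v = 0 \<longrightarrow> v = 0"
    by (rule posdef_ker[OF G_path(1)[OF l_d2 r_d2] c pd])
  have e1: "integral {0..1} (\<lambda>t. Gmat l2 r2 lam y X UNIV (t *\<^sub>R bh + (1 - t) *\<^sub>R bM)) *v (bM - bh)
      = (\<Sum>i\<in>M. l1 (y i) (X $ i \<bullet> bM) *\<^sub>R X $ i)"
  proof -
    have "integral {0..1} (\<lambda>t. Gmat l2 r2 lam y X UNIV (t *\<^sub>R bh + (1 - t) *\<^sub>R bM)) *v (bM - bh)
       = - (integral {0..1} (\<lambda>t. Gmat l2 r2 lam y X UNIV (t *\<^sub>R bh + (1 - t) *\<^sub>R bM)) *v (bh - bM))"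
      by (simp add: matrix_vector_mult_diff_distrib)
    also have "\<dots> = ?F UNIV bM - ?F UNIV bh"
      unfolding G_path(2)[OF l_d2 r_d2] by simp
    also have "\<dots> = (\<Sum>i\<in>M. l1 (y i) (X $ i \<bullet> bM) *\<^sub>R X $ i)"
      using gh gM unfolding split[of "\<lambda>i. l1 (y i) (X $ i \<bullet> bM) *\<^sub>R X $ i"]
      by (simp add: algebra_simps)
    finally show ?thesis .
  qed
  have e2: "integral {0..1} (\<lambda>t. Gmat l2 r2 lam y X (- M) (t *\<^sub>R bh + (1 - t) *\<^sub>R bM)) *v (bM - bh)
      = (\<Sum>i\<in>M. l1 (y i) (X $ i \<bullet> bh) *\<^sub>R X $ i)"
  proof -
    have "integral {0..1} (\<lambda>t. Gmat l2 r2 lam y X (- M) (t *\<^sub>R bh + (1 - t) *\<^sub>R bM)) *v (bM - bh)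
       = - (integral {0..1} (\<lambda>t. Gmat l2 r2 lam y X (- M) (t *\<^sub>R bh + (1 - t) *\<^sub>R bM)) *v (bh - bM))"
      by (simp add: matrix_vector_mult_diff_distrib)
    also have "\<dots> = ?F (- M) bM - ?F (- M) bh"
      unfolding G_path(2)[OF l_d2 r_d2] by simp
    also have "\<dots> = (\<Sum>i\<in>M. l1 (y i) (X $ i \<bullet> bh) *\<^sub>R X $ i)"
    proof -
      have "(\<Sum>i\<in>M. l1 (y i) (X $ i \<bullet> bh) *\<^sub>R X $ i) + ?F (- M) bh = 0"
        using gh unfolding split[of "\<lambda>i. l1 (y i) (X $ i \<bullet> bh) *\<^sub>R X $ i"]
        by (simp add: add.assoc)
      then have "?F (- M) bh = - (\<Sum>i\<in>M. l1 (y i) (X $ i \<bullet> bh) *\<^sub>R X $ i)"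
        by (simp add: eq_neg_iff_add_eq_0 add.commute)
      then show ?thesis using gM by simp
    qed
    finally show ?thesis .
  qed
  show ?thesis
    using inv_solve[OF ker e1] inv_solve[OF ker e2] by blast
qed

end
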